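(* Let $I\subseteq R$ be a good ideal. Suppose $\mathbb N^n$ is the disjoint union of finitely many cones $C_1,\dots,C_r$ such that $I_a=I_b$ whenever $a,b$ lie in the same cone $C_j$. Let $L$ be the maximum, over $j$, of the sum of the coordinates of the vertex of $C_j$, and assume that every zero-dimensional cone $C_j$ has vertex coordinate sum strictly less than $L$. Then $I^k$ is Ratliff--Rush (i.e. $\widetilde{I^k}=I^k$) for every integer $k\ge L+1$.
   Context: Let $\mathbb K$ be a field, $R=\mathbb K[x_1,\dots,x_n]$, $\mathfrak m=\langle x_1,\dots,x_n\rangle$, $\mathbb N=\{0,1,2,\dots\}$. A monomial $x_1^{\alpha_1}\cdots x_n^{\alpha_n}$ is identified with the point $(\alpha_1,\dots,\alpha_n)\in\mathbb N^n$. For a monomial ideal $I$, $G(I)$ denotes its (unique) minimal monomial generating set. If $I$ is an $\mathfrak m$-primary monomial ideal, then for each $i$ there is a unique $d_i\ge1$ with $x_i^{d_i}\in G(I)$; write $\mu_i=x_i^{d_i}$. For $(a_1,\dots,a_n)\in\mathbb N^n$ the box associated to $I$ is $B_{a_1,\dots,a_n}=([a_1d_1,(a_1+1)d_1]\times\cdots\times[a_nd_n,(a_n+1)d_n])\cap\mathbb N^n$; a monomial belongs to a box if its exponent vector does. An $\mathfrak m$-primary monomial ideal $I$ is called good if for every integer $l\ge1$, every element of $G(I^l)$ belongs to some box $B_{a_1,\dots,a_n}$ with $a_1+\dots+a_n=l-1$. For a good ideal $I$ and $a=(a_1,\dots,a_n)\in\mathbb N^n$, with $l=a_1+\dots+a_n+1$,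 define $I_{a}=I_{a_1,\dots,a_n}=\left\langle \frac{m}{\mu_1^{a_1}\cdots\mu_n^{a_n}} : m\in B_{a_1,\dots,a_n}\cap G(I^l)\right\rangle$. For $v\in\mathbb N^n$ and $S\subseteq\{1,\dots,n\}$, the cone with vertex $v$ and set of fixed coordinates $S$ is $\{c\in\mathbb N^n : c_i=v_i \text{ for } i\in S,\ c_i\ge v_i \text{ for } i\notin S\}$; its dimension is $n-|S|$. The Ratliff--Rush closure of a regular ideal $J$ is $\tilde J=\bigcup_{k\ge0}(J^{k+1}:J^k)$, and $J$ is Ratliff--Rush if $J=\tilde J$. *)

theory Defs
  imports Main "HOL-Library.Poly_Mapping" "HOL-Library.Function_Algebras"
begin

text \<open>Polynomial ring K[x_i : i in 'n] over a field, 'n a finite index type (n = CARD('n)).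
  Exponent vectors (points of N^n) are functions 'n => nat (pointwise addition);
  polynomials are finitely supported maps from exponent vectors to coefficients.\<close>

type_synonym ('n, 'k) mpoly = "('n \<Rightarrow> nat) \<Rightarrow>\<^sub>0 'k"

definition mono :: "('n \<Rightarrow> nat) \<Rightarrow> ('n, 'k::field) mpoly" where
  "mono \<alpha> = Poly_Mapping.single \<alpha> 1"

definition unitv :: "'n \<Rightarrow> 'n \<Rightarrow> nat" where
  "unitv i = (\<lambda>j. if j = i then 1 else 0)"

definition var :: "'n \<Rightarrow> ('n, 'k::field) mpoly" where
  "var i = mono (unitv i)"

definition ideal_gen :: "('n, 'k::field) mpoly set \<Rightarrow> ('n, 'k) mpoly set" where
  "ideal_gen S = {(\<Sum>g\<in>F. c g * g) | F c. finite F \<and> F \<subseteq> S}"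

definition is_ideal :: "('n, 'k::field) mpoly set \<Rightarrow> bool" where
  "is_ideal J \<longleftrightarrow> 0 \<in> J \<and> (\<forall>p\<in>J. \<forall>q\<in>J. p + q \<in> J) \<and> (\<forall>p\<in>J. \<forall>r. r * p \<in> J)"

definition monomial_ideal :: "('n, 'k::field) mpoly set \<Rightarrow> bool" where
  "monomial_ideal J \<longleftrightarrow> (\<exists>E. J = ideal_gen (mono ` E))"

definition max_ideal :: "('n, 'k::field) mpoly set" where
  "max_ideal = ideal_gen (range var)"

definition radical :: "('n, 'k::field) mpoly set \<Rightarrow> ('n, 'k) mpoly set" where
  "radical J = {p. \<exists>k. p ^ k \<in> J}"

definition m_primary :: "('n, 'k::field) mpoly set \<Rightarrow> bool" where
  "m_primary J \<longleftrightarrow> is_ideal J \<and> radical J = max_ideal"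

text \<open>G(J): exponents of the minimal monomial generators (monomials of J minimal
  with respect to divisibility, i.e. componentwise order of exponents).\<close>
definition mingens :: "('n, 'k::field) mpoly set \<Rightarrow> ('n \<Rightarrow> nat) set" where
  "mingens J = {\<alpha>. mono \<alpha> \<in> J \<and> (\<forall>\<beta>. mono \<beta> \<in> J \<and> (\<forall>i. \<beta> i \<le> \<alpha> i) \<longrightarrow> \<beta> = \<alpha>)}"

definition ideal_pow :: "('n, 'k::field) mpoly set \<Rightarrow> nat \<Rightarrow> ('n, 'k) mpoly set" where
  "ideal_pow J l = ideal_gen {prod_list xs | xs. length xs = l \<and> set xs \<subseteq> J}"

definition colon :: "('n, 'k::field) mpoly set \<Rightarrow> ('n, 'k) mpoly set \<Rightarrow> ('n, 'k) mpoly set" where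
  "colon A B = {p. \<forall>b\<in>B. p * b \<in> A}"

definition ratliff_rush :: "('n, 'k::field) mpoly set \<Rightarrow> ('n, 'k) mpoly set" where
  "ratliff_rush J = (\<Union>k. colon (ideal_pow J (k + 1)) (ideal_pow J k))"

definition dexp :: "('n, 'k::field) mpoly set \<Rightarrow> 'n \<Rightarrow> nat" where
  "dexp J i = (THE d. d \<ge> 1 \<and> (\<lambda>j. if j = i then d else 0) \<in> mingens J)"

definition box :: "('n, 'k::field) mpoly set \<Rightarrow> ('n \<Rightarrow> nat) \<Rightarrow> ('n \<Rightarrow> nat) set" where
  "box J a = {\<alpha>. \<forall>i. a i * dexp J i \<le> \<alpha> i \<and> \<alpha> i \<le> (a i + 1) * dexp J i}"

definition good_ideal :: "('n::finite, 'k::field) mpoly set \<Rightarrow> bool" where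
  "good_ideal J \<longleftrightarrow> monomial_ideal J \<and> m_primary J \<and>
     (\<forall>l\<ge>1. \<forall>\<alpha>\<in>mingens (ideal_pow J l). \<exists>a. (\<Sum>i\<in>UNIV. a i) = l - 1 \<and> \<alpha> \<in> box J a)"

text \<open>I_a: generated by m / (mu_1^{a_1} ... mu_n^{a_n}) for m in B_a \<inter> G(I^l), l = |a| + 1.\<close>
definition ideal_at :: "('n::finite, 'k::field) mpoly set \<Rightarrow> ('n \<Rightarrow> nat) \<Rightarrow> ('n, 'k) mpoly set" where
  "ideal_at J a = ideal_gen
     {mono (\<lambda>i. \<alpha> i - a i * dexp J i) | \<alpha>. \<alpha> \<in> box J a \<inter> mingens (ideal_pow J ((\<Sum>i\<in>UNIV. a i) + 1))}"

definition cone :: "('n \<Rightarrow> nat) \<Rightarrow> 'n set \<Rightarrow> ('n \<Rightarrow> nat) set" where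
  "cone v S = {c. (\<forall>i\<in>S. c i = v i) \<and> (\<forall>i. i \<notin> S \<longrightarrow> v i \<le> c i)}"

definition cone_dim :: "'n::finite set \<Rightarrow> nat" where
  "cone_dim S = card (UNIV :: 'n set) - card S"

end

theory Submission
  imports Defs
begin

lemma ideal_genI: "finite F \<Longrightarrow> F \<subseteq> S \<Longrightarrow> p = (\<Sum>g\<in>F. c g * g) \<Longrightarrow> p \<in> ideal_gen S"
  unfolding ideal_gen_def by (rule CollectI, intro exI conjI) 

lemma ideal_genE: "p \<in> ideal_gen S \<Longrightarrow> (\<And>F c. finite F \<Longrightarrow> F \<subseteq> S \<Longrightarrow> p = (\<Sum>g\<in>F. c g * g) \<Longrightarrow> P) \<Longrightarrow> P"
  unfolding ideal_gen_def by blast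

lemma sum_extend:
  assumes "finite G" "F \<subseteq> G"
  shows "(\<Sum>g\<in>F. c g * g) = (\<Sum>g\<in>G. (if g \<in> F then c g else 0) * (g::('n,'k::field) mpoly))"
proof -
  have "(\<Sum>g\<in>G. (if g \<in> F then c g else 0) * g) = (\<Sum>g\<in>F. (if g \<in> F then c g else 0) * g)"
    by (rule sum.mono_neutral_right[OF assms(1) assms(2)]) auto
  also have "\<dots> = (\<Sum>g\<in>F. c g * g)" by simp
  finally show ?thesis by simp
qed

lemma is_idealI:
  assumes "0 \<in> J" "\<And>p q. p \<in> J \<Longrightarrow> q \<in> J \<Longrightarrow> p + q \<in> J" "\<And>p r. p \<in> J \<Longrightarrow> r * p \<in> J"
  shows "is_ideal (J::('n,'k::field) mpoly set)"
  using assms unfolding is_ideal_def by blast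

lemma ideal_gen_is_ideal: "is_ideal (ideal_gen (S::('n,'k::field) mpoly set))"
proof (rule is_idealI)
  show "0 \<in> ideal_gen S" by (rule ideal_genI[of "{}"]) auto
next
  fix p q assume p: "p \<in> ideal_gen S" and q: "q \<in> ideal_gen S"
  from p obtain F c where F: "finite F" "F \<subseteq> S" "p = (\<Sum>g\<in>F. c g * g)" by (rule ideal_genE)
  from q obtain F' c' where F': "finite F'" "F' \<subseteq> S" "q = (\<Sum>g\<in>F'. c' g * g)" by (rule ideal_genE)
  define c'' where "c'' = (\<lambda>g. (if g \<in> F then c g else 0) + (if g \<in> F' then c' g else 0))"
  have e1: "p = (\<Sum>g\<in>F\<union>F'. (if g \<in> F then c g else 0) * g)" using F F' sum_extend[of "F\<union>F'" F c] by simp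
  have e2: "q = (\<Sum>g\<in>F\<union>F'. (if g \<in> F' then c' g else 0) * g)" using F F' sum_extend[of "F\<union>F'" F' c'] by simp
  have "p + q = (\<Sum>g\<in>F\<union>F'. c'' g * g)"
    unfolding e1 e2 c''_def sum.distrib[symmetric] distrib_right ..
  then show "p + q \<in> ideal_gen S" using F F' by (intro ideal_genI[of "F\<union>F'" S "p+q" c'']) auto
next
  fix p r assume p: "p \<in> ideal_gen S"
  from p obtain F c where F: "finite F" "F \<subseteq> S" "p = (\<Sum>g\<in>F. c g * g)" by (rule ideal_genE)
  have "r * p = (\<Sum>g\<in>F. (r * c g) * g)" using F by (simp add: sum_distrib_left mult.assoc)
  then show "r * p \<in> ideal_gen S" using F by (intro ideal_genI[of F S "r*p" "\<lambda>g. r * c g"]) auto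
qed

lemma ideal_gen_subset: "(S::('n,'k::field) mpoly set) \<subseteq> ideal_gen S"
proof
  fix g assume "g \<in> S"
  then show "g \<in> ideal_gen S" by (intro ideal_genI[of "{g}" _ _ "\<lambda>_. 1"]) auto
qed

lemma ideal_sum:
  assumes "is_ideal J" "finite A" "\<And>x. x \<in> A \<Longrightarrow> f x \<in> J"
  shows "sum f A \<in> (J::('n,'k::field) mpoly set)"
  using assms(2,3)
proof (induction A rule: finite_induct)
  case empty then show ?case using assms(1) by (simp add: is_ideal_def)
next
  case (insert x F) then show ?case using assms(1) by (simp add: is_ideal_def)
qed

lemma ideal_multL: "is_ideal J \<Longrightarrow> p \<in> J \<Longrightarrow> r * p \<in> (J::('n,'k::field) mpoly set)"
  by (simp add: is_ideal_def)
lemma ideal_multR: "is_ideal J \<Longrightarrow> p \<in> J \<Longrightarrow> p * r \<in> (J::('n,'k::field) mpoly set)"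
  by (metis ideal_multL mult.commute)
lemma ideal_add: "is_ideal J \<Longrightarrow> p \<in> J \<Longrightarrow> q \<in> J \<Longrightarrow> p + q \<in> (J::('n,'k::field) mpoly set)"
  by (simp add: is_ideal_def)

lemma ideal_gen_least: "is_ideal J \<Longrightarrow> S \<subseteq> J \<Longrightarrow> ideal_gen S \<subseteq> (J::('n,'k::field) mpoly set)"
proof
  fix p assume J: "is_ideal J" "S \<subseteq> J" and p: "p \<in> ideal_gen S"
  from p obtain F c where F: "finite F" "F \<subseteq> S" "p = (\<Sum>g\<in>F. c g * g)" by (rule ideal_genE)
  show "p \<in> J" unfolding F(3) using F J by (intro ideal_sum) (auto intro: ideal_multL)
qed

lemma mono_mult: "(mono a :: ('n,'k::field) mpoly) * mono b = mono (a + b)"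
  unfolding mono_def by (simp add: mult_single)

lemma keys_mono[simp]: "Poly_Mapping.keys (mono a :: ('n,'k::field) mpoly) = {a}"
  unfolding mono_def by simp

lemma monomial_gen_char:
  assumes "p \<in> ideal_gen (mono ` E :: ('n,'k::field) mpoly set)" "\<beta> \<in> Poly_Mapping.keys p"
  shows "\<exists>\<alpha>\<in>E. \<forall>i. \<alpha> i \<le> \<beta> i"
proof -
  define M where "M = {p :: ('n,'k) mpoly. \<forall>\<beta>\<in>Poly_Mapping.keys p. \<exists>\<alpha>\<in>E. \<forall>i. \<alpha> i \<le> \<beta> i}"
  have "is_ideal M"
  proof (rule is_idealI)
    show "0 \<in> M" by (simp add: M_def)
  next
    fix p q assume "p \<in> M" "q \<in> M"
    then show "p + q \<in> M" using Poly_Mapping.keys_add[of p q] unfolding M_def by blast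
  next
    fix p r assume p: "p \<in> M"
    show "r * p \<in> M" unfolding M_def
    proof (rule CollectI, rule ballI)
      fix \<beta> assume "\<beta> \<in> Poly_Mapping.keys (r * p)"
      then obtain a b where ab: "\<beta> = a + b" "b \<in> Poly_Mapping.keys p" using Poly_Mapping.keys_mult[of r p] by blast
      then obtain \<alpha> where "\<alpha> \<in> E" "\<forall>i. \<alpha> i \<le> b i" using p unfolding M_def by blast
      then show "\<exists>\<alpha>\<in>E. \<forall>i. \<alpha> i \<le> \<beta> i" using ab by (metis add.commute le_add1 order_trans plus_fun_apply)
    qed
  qed
  moreover have "mono ` E \<subseteq> M" by (auto simp: M_def)
  ultimately have "ideal_gen (mono ` E) \<subseteq> M" by (rule ideal_gen_least)
  then show ?thesis using assms unfolding M_def by blast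
qed

lemma mono_le_in:
  assumes "is_ideal J" "mono \<alpha> \<in> J" "\<forall>i. \<alpha> i \<le> \<beta> i"
  shows "mono \<beta> \<in> (J::('n,'k::field) mpoly set)"
proof -
  have "\<beta> = (\<beta> - \<alpha>) + \<alpha>" using assms(3) by (auto simp: fun_eq_iff)
  then have "mono \<beta> = mono (\<beta> - \<alpha>) * (mono \<alpha> :: ('n,'k) mpoly)" by (metis mono_mult)
  then show ?thesis using assms ideal_multL by metis
qed

lemma expand_poly: "(p::('n,'k::field) mpoly) = (\<Sum>\<beta>\<in>Poly_Mapping.keys p. Poly_Mapping.single 0 (Poly_Mapping.lookup p \<beta>) * mono \<beta>)"
proof (rule poly_mapping_eqI)
  fix x
  have "Poly_Mapping.lookup (\<Sum>\<beta>\<in>Poly_Mapping.keys p. Poly_Mapping.single 0 (Poly_Mapping.lookup p \<beta>) * mono \<beta>) x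
      = (\<Sum>\<beta>\<in>Poly_Mapping.keys p. Poly_Mapping.lookup (Poly_Mapping.single \<beta> (Poly_Mapping.lookup p \<beta>)) x)"
    by (simp add: lookup_sum mono_def mult_single)
  also have "\<dots> = Poly_Mapping.lookup p x"
    by (simp add: lookup_single when_def in_keys_iff)
  finally show "Poly_Mapping.lookup p x = Poly_Mapping.lookup (\<Sum>\<beta>\<in>Poly_Mapping.keys p. Poly_Mapping.single 0 (Poly_Mapping.lookup p \<beta>) * mono \<beta>) x" by simp
qed

lemma ideal_from_keys: "is_ideal J \<Longrightarrow> (\<And>\<beta>. \<beta> \<in> Poly_Mapping.keys p \<Longrightarrow> mono \<beta> \<in> J) \<Longrightarrow> p \<in> (J::('n,'k::field) mpoly set)"
  by (subst expand_poly) (auto intro!: ideal_sum ideal_multL)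

lemma keys_mult_mono:
  assumes "\<beta> \<in> Poly_Mapping.keys (f::('n,'k::field) mpoly)"
  shows "\<beta> + \<delta> \<in> Poly_Mapping.keys (f * mono \<delta>)"
proof -
  have "f * mono \<delta> = (\<Sum>b\<in>Poly_Mapping.keys f. Poly_Mapping.single (b + \<delta>) (Poly_Mapping.lookup f b))"
    by (subst expand_poly) (simp add: sum_distrib_right mono_def mult_single mult.assoc)
  then have "Poly_Mapping.lookup (f * mono \<delta>) (\<beta> + \<delta>) = (\<Sum>b\<in>Poly_Mapping.keys f. Poly_Mapping.lookup f b when b = \<beta>)"
    by (simp add: lookup_sum lookup_single)
  also have "\<dots> = Poly_Mapping.lookup f \<beta>" using assms by (simp add: when_def)
  finally show ?thesis using assms by (simp add: in_keys_iff)
qed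

lemma pow_gen: "length xs = l \<Longrightarrow> set xs \<subseteq> J \<Longrightarrow> prod_list xs \<in> ideal_pow (J::('n,'k::field) mpoly set) l"
  unfolding ideal_pow_def by (rule subsetD[OF ideal_gen_subset]) blast

lemma ideal_pow_ideal: "is_ideal (ideal_pow (J::('n,'k::field) mpoly set) l)"
  unfolding ideal_pow_def by (rule ideal_gen_is_ideal)

lemma pow_mult:
  assumes "p \<in> ideal_pow J a" "q \<in> ideal_pow J b"
  shows "p * q \<in> ideal_pow (J::('n,'k::field) mpoly set) (a + b)"
proof -
  define T where "T = ideal_pow J (a + b)"
  have T: "is_ideal T" unfolding T_def by (rule ideal_pow_ideal)
  have step1: "g * q' \<in> T" if g: "g \<in> {prod_list xs | xs. length xs = a \<and> set xs \<subseteq> J}" and q': "q' \<in> ideal_pow J b" for g q'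
  proof -
    from g obtain xs where xs: "g = prod_list xs" "length xs = a" "set xs \<subseteq> J" by blast
    define Q where "Q = {q. g * q \<in> T}"
    have "is_ideal Q"
    proof (rule is_idealI)
      show "0 \<in> Q" using T by (simp add: Q_def is_ideal_def)
    next
      fix p q assume "p \<in> Q" "q \<in> Q" then show "p + q \<in> Q" using T
        by (simp add: Q_def distrib_left ideal_add)
    next
      fix p r assume "p \<in> Q"
      then have "g * p \<in> T" by (simp add: Q_def)
      then have "r * (g * p) \<in> T" by (rule ideal_multL[OF T])
      then show "r * p \<in> Q" by (simp add: Q_def mult.left_commute)
    qed
    moreover have "{prod_list ys | ys. length ys = b \<and> set ys \<subseteq> J} \<subseteq> Q"
    proof
      fix h assume "h \<in> {prod_list ys | ys. length ys = b \<and> set ys \<subseteq> J}"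
      then obtain ys where ys: "h = prod_list ys" "length ys = b" "set ys \<subseteq> J" by blast
      have "g * h = prod_list (xs @ ys)" using xs ys by simp
      moreover have "prod_list (xs @ ys) \<in> T" unfolding T_def using xs ys by (intro pow_gen) auto
      ultimately show "h \<in> Q" by (simp add: Q_def)
    qed
    ultimately have "ideal_pow J b \<subseteq> Q" unfolding ideal_pow_def by (rule ideal_gen_least)
    then show ?thesis using q' by (auto simp: Q_def)
  qed
  define P where "P = {p. \<forall>q'\<in>ideal_pow J b. p * q' \<in> T}"
  have "is_ideal P"
  proof (rule is_idealI)
    show "0 \<in> P" using T by (simp add: P_def is_ideal_def)
  next
    fix p q assume "p \<in> P" "q \<in> P" then show "p + q \<in> P" using T
      by (simp add: P_def distrib_right ideal_add)
  next
    fix p r assume "p \<in> P" then show "r * p \<in> P" using T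
      by (simp add: P_def mult.assoc ideal_multL)
  qed
  moreover have "{prod_list xs | xs. length xs = a \<and> set xs \<subseteq> J} \<subseteq> P"
    using step1 by (auto simp: P_def)
  ultimately have "ideal_pow J a \<subseteq> P" unfolding ideal_pow_def by (rule ideal_gen_least)
  then show ?thesis using assms by (auto simp: P_def T_def)
qed

lemma one_pow0: "1 \<in> ideal_pow (J::('n,'k::field) mpoly set) 0"
  using pow_gen[of "[]" 0 J] by simp

lemma prod_list_pow_pow:
  "set xs \<subseteq> ideal_pow J k \<Longrightarrow> prod_list xs \<in> ideal_pow (J::('n,'k::field) mpoly set) (k * length xs)"
proof (induction xs)
  case Nil then show ?case using one_pow0 by simp
next
  case (Cons x xs)
  then have "x * prod_list xs \<in> ideal_pow J (k + k * length xs)" by (intro pow_mult) auto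
  then show ?case by simp
qed

lemma pow_pow: "ideal_pow (ideal_pow J k) s \<subseteq> ideal_pow (J::('n,'k::field) mpoly set) (k * s)"
  unfolding ideal_pow_def[of "ideal_pow J k"]
  by (rule ideal_gen_least[OF ideal_pow_ideal]) (auto dest: prod_list_pow_pow)

lemma mono_zero: "(mono 0 :: ('n,'k::field) mpoly) = 1"
  unfolding mono_def by simp

lemma monomial_ideal_keys:
  assumes "J = ideal_gen (mono ` E)" "p \<in> J" "\<beta> \<in> Poly_Mapping.keys p"
  shows "mono \<beta> \<in> (J::('n,'k::field) mpoly set)"
proof -
  obtain \<alpha> where "\<alpha> \<in> E" "\<forall>i. \<alpha> i \<le> \<beta> i" using monomial_gen_char assms by metis
  moreover have "mono \<alpha> \<in> J" using \<open>\<alpha> \<in> E\<close> assms(1) ideal_gen_subset by blast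
  ultimately show ?thesis using mono_le_in[of J \<alpha> \<beta>] assms(1) ideal_gen_is_ideal by blast
qed

lemma pow_monomial:
  assumes J: "J = ideal_gen (mono ` E)" and p: "p \<in> ideal_pow J m" and b: "\<beta> \<in> Poly_Mapping.keys p"
  shows "mono \<beta> \<in> ideal_pow (J::('n,'k::field) mpoly set) m"
proof -
  define M where "M = {p :: ('n,'k) mpoly. \<forall>\<beta>\<in>Poly_Mapping.keys p. mono \<beta> \<in> ideal_pow J m}"
  have "is_ideal M"
  proof (rule is_idealI)
    show "0 \<in> M" by (simp add: M_def)
  next
    fix p q assume "p \<in> M" "q \<in> M"
    then show "p + q \<in> M" using Poly_Mapping.keys_add[of p q] unfolding M_def by blast
  next
    fix p r assume p: "p \<in> M"
    show "r * p \<in> M" unfolding M_def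
    proof (rule CollectI, rule ballI)
      fix \<beta> assume "\<beta> \<in> Poly_Mapping.keys (r * p)"
      then obtain a b where ab: "\<beta> = a + b" "b \<in> Poly_Mapping.keys p" using Poly_Mapping.keys_mult[of r p] by blast
      then have "mono b \<in> ideal_pow J m" using p unfolding M_def by blast
      then have "mono a * mono b \<in> ideal_pow J m" by (rule ideal_multL[OF ideal_pow_ideal])
      then show "mono \<beta> \<in> ideal_pow J m" using ab by (simp add: mono_mult)
    qed
  qed
  have gen: "\<forall>\<beta>\<in>Poly_Mapping.keys (prod_list xs). mono \<beta> \<in> ideal_pow J (length xs)" if "set xs \<subseteq> J" for xs
    using that
  proof (induction xs)
    case Nil
    have "mono 0 \<in> ideal_pow J 0" using one_pow0[of J] mono_zero by metis
    then show ?case by (simp add: zero_fun_def)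
  next
    case (Cons x xs)
    show ?case
    proof
      fix \<beta> assume "\<beta> \<in> Poly_Mapping.keys (prod_list (x # xs))"
      then obtain a b where ab: "\<beta> = a + b" "a \<in> Poly_Mapping.keys x" "b \<in> Poly_Mapping.keys (prod_list xs)"
        using Poly_Mapping.keys_mult[of x "prod_list xs"] by auto
      have "mono a \<in> J" using monomial_ideal_keys[OF J, of x a] Cons.prems ab by auto
      then have "mono a \<in> ideal_pow J 1" using pow_gen[of "[mono a]" 1 J] by simp
      moreover have "mono b \<in> ideal_pow J (length xs)" using Cons ab by auto
      ultimately have "mono a * mono b \<in> ideal_pow J (1 + length xs)" by (rule pow_mult)
      then show "mono \<beta> \<in> ideal_pow J (length (x # xs))" using ab by (simp add: mono_mult)
    qed
  qed
  have "{prod_list xs | xs. length xs = m \<and> set xs \<subseteq> J} \<subseteq> M"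
    using gen unfolding M_def by auto
  then have "ideal_pow J m \<subseteq> M" unfolding ideal_pow_def[of J m] by (rule ideal_gen_least[OF \<open>is_ideal M\<close>])
  then show ?thesis using p b unfolding M_def by blast
qed

lemma mono_pow: "(mono a :: ('n,'k::field) mpoly) ^ s = mono (\<lambda>j. s * a j)"
proof (induction s)
  case 0
  have "(\<lambda>j. 0 * a j) = (0::'n\<Rightarrow>nat)" by (simp add: fun_eq_iff)
  then show ?case by (simp add: mono_zero)
next
  case (Suc s)
  have "(\<lambda>j. a j + s * a j) = a + (\<lambda>j. s * a j)" by (simp add: fun_eq_iff)
  then show ?case using Suc by (simp add: mono_mult)
qed

lemma le_sum_eq:
  fixes a c :: "'n::finite \<Rightarrow> nat"
  assumes "\<forall>i. a i \<le> c i" "(\<Sum>i\<in>UNIV. a i) = (\<Sum>i\<in>UNIV. c i)"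
  shows "a = c"
proof (rule ccontr)
  assume "a \<noteq> c"
  then obtain j where "a j \<noteq> c j" by auto
  then have "a j < c j" using assms(1) le_neq_implies_less by blast
  then have "(\<Sum>i\<in>UNIV. a i) < (\<Sum>i\<in>UNIV. c i)"
    using assms(1) by (intro sum_strict_mono_ex1) auto
  then show False using assms(2) by simp
qed

lemma exists_mingen:
  fixes J :: "('n::finite,'k::field) mpoly set"
  assumes "mono \<gamma> \<in> J"
  shows "\<exists>\<alpha>\<in>mingens J. \<forall>i. \<alpha> i \<le> \<gamma> i"
proof -
  define P where "P = (\<lambda>\<beta>::'n\<Rightarrow>nat. mono \<beta> \<in> J \<and> (\<forall>i. \<beta> i \<le> \<gamma> i))"
  have "P \<gamma>" using assms by (simp add: P_def)
  then obtain \<alpha> where \<alpha>: "P \<alpha>" and min: "\<And>y. P y \<Longrightarrow> (\<Sum>i\<in>UNIV. \<alpha> i) \<le> (\<Sum>i\<in>UNIV. y i)"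
    using ex_has_least_nat[of P \<gamma> "\<lambda>\<beta>. \<Sum>i\<in>UNIV. \<beta> i"] by blast
  have "\<alpha> \<in> mingens J" unfolding mingens_def
  proof (rule CollectI, intro conjI allI impI)
    show "mono \<alpha> \<in> J" using \<alpha> by (simp add: P_def)
  next
    fix \<beta> assume b: "mono \<beta> \<in> J \<and> (\<forall>i. \<beta> i \<le> \<alpha> i)"
    then have "P \<beta>" using \<alpha> unfolding P_def using order_trans by blast
    then have "(\<Sum>i\<in>UNIV. \<alpha> i) \<le> (\<Sum>i\<in>UNIV. \<beta> i)" by (rule min)
    moreover have "(\<Sum>i\<in>UNIV. \<beta> i) \<le> (\<Sum>i\<in>UNIV. \<alpha> i)" using b by (intro sum_mono) auto
    ultimately show "\<beta> = \<alpha>" using b le_sum_eq[of \<beta> \<alpha>] by auto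
  qed
  then show ?thesis using \<alpha> by (auto simp: P_def)
qed

lemma mingens_in: "\<alpha> \<in> mingens J \<Longrightarrow> mono \<alpha> \<in> J"
  by (simp add: mingens_def)

lemma good_monomial:
  assumes "good_ideal (I::('n::finite,'k::field) mpoly set)"
  obtains E where "I = ideal_gen (mono ` E)"
  using assms unfolding good_ideal_def monomial_ideal_def by blast

lemma good_is_ideal: "good_ideal (I::('n::finite,'k::field) mpoly set) \<Longrightarrow> is_ideal I"
  by (metis good_monomial ideal_gen_is_ideal)

lemma good_not_one:
  assumes "good_ideal (I::('n::finite,'k::field) mpoly set)"
  shows "mono 0 \<notin> I"
proof
  assume m0: "mono 0 \<in> I"
  have "mono 0 ^ 1 \<in> I" using m0 by simp
  then have "mono 0 \<in> radical I" unfolding radical_def by blast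
  moreover have "radical I = max_ideal" using assms unfolding good_ideal_def m_primary_def by blast
  ultimately have "(mono 0 :: ('n,'k) mpoly) \<in> max_ideal" by simp
  moreover have "(range var :: ('n,'k) mpoly set) = mono ` range unitv" unfolding var_def by (rule image_image[symmetric])
  ultimately have "mono 0 \<in> ideal_gen (mono ` range unitv :: ('n,'k) mpoly set)"
    unfolding max_ideal_def by simp
  moreover have "(0::'n\<Rightarrow>nat) \<in> Poly_Mapping.keys (mono 0 :: ('n,'k) mpoly)" by simp
  ultimately have "\<exists>\<alpha>\<in>range unitv. \<forall>i. \<alpha> i \<le> (0::'n\<Rightarrow>nat) i" by (rule monomial_gen_char)
  then obtain i where "\<forall>j. unitv i j \<le> (0::'n\<Rightarrow>nat) j" by blast
  then have "unitv i i \<le> 0" by simp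
  then show False by (simp add: unitv_def)
qed

lemma good_pure_power:
  assumes "good_ideal (I::('n::finite,'k::field) mpoly set)"
  shows "\<exists>k. mono (\<lambda>j. if j = i then k else 0) \<in> I"
proof -
  have "var i \<in> (max_ideal :: ('n,'k) mpoly set)" unfolding max_ideal_def
    using ideal_gen_subset by blast
  moreover have "radical I = max_ideal" using assms unfolding good_ideal_def m_primary_def by blast
  ultimately have "var i \<in> radical I" by simp
  then obtain k where k: "(var i :: ('n,'k) mpoly) ^ k \<in> I" unfolding radical_def by blast
  have e: "(\<lambda>j. k * unitv i j) = (\<lambda>j. if j = i then k else 0)" by (simp add: unitv_def fun_eq_iff)
  have "(var i :: ('n,'k) mpoly) ^ k = mono (\<lambda>j. if j = i then k else 0)"
    unfolding var_def mono_pow e ..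
  then show ?thesis using k by metis
qed

lemma dexp_props:
  assumes good: "good_ideal (I::('n::finite,'k::field) mpoly set)"
  shows "dexp I i \<ge> 1 \<and> (\<lambda>j. if j = i then dexp I i else 0) \<in> mingens I"
proof -
  define e where "e = (\<lambda>d::nat. (\<lambda>j. if j = i then d else 0))"
  have ei: "e d i = d" for d by (simp add: e_def)
  obtain k where "mono (e k) \<in> I" using good_pure_power[OF good] unfolding e_def by blast
  then obtain \<alpha> where \<alpha>: "\<alpha> \<in> mingens I" "\<forall>j. \<alpha> j \<le> e k j" using exists_mingen by blast
  have ae: "\<alpha> = e (\<alpha> i)"
  proof
    fix j show "\<alpha> j = e (\<alpha> i) j"
    proof (cases "j = i")
      case True then show ?thesis by (simp add: e_def)
    next
      case False then have "\<alpha> j \<le> 0" using \<alpha>(2)[rule_format, of j] by (simp add: e_def)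
      then show ?thesis using False by (simp add: e_def)
    qed
  qed
  have "\<alpha> i \<noteq> 0"
  proof
    assume "\<alpha> i = 0"
    then have "\<alpha> = e 0" using ae by metis
    moreover have "e 0 = 0" by (simp add: e_def fun_eq_iff)
    ultimately have "\<alpha> = 0" by simp
    then show False using mingens_in[OF \<alpha>(1)] good_not_one[OF good] by simp
  qed
  moreover have "e (\<alpha> i) \<in> mingens I" using \<alpha>(1) ae by metis
  ultimately have ex: "\<alpha> i \<ge> 1 \<and> e (\<alpha> i) \<in> mingens I" by simp
  have uniq: "d = \<alpha> i" if "d \<ge> 1 \<and> e d \<in> mingens I" for d
  proof -
    have mg1: "\<forall>\<beta>. mono \<beta> \<in> I \<and> (\<forall>j. \<beta> j \<le> e d j) \<longrightarrow> \<beta> = e d" using that unfolding mingens_def by blast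
    have mg2: "\<forall>\<beta>. mono \<beta> \<in> I \<and> (\<forall>j. \<beta> j \<le> e (\<alpha> i) j) \<longrightarrow> \<beta> = e (\<alpha> i)" using ex unfolding mingens_def by blast
    have m1: "mono (e d) \<in> I" "mono (e (\<alpha> i)) \<in> I" using that ex mingens_in by blast+
    show ?thesis
    proof (cases "d \<le> \<alpha> i")
      case True
      then have "\<forall>j. e d j \<le> e (\<alpha> i) j" by (simp add: e_def)
      then have "e d = e (\<alpha> i)" using mg2 m1(1) by blast
      then have "e d i = e (\<alpha> i) i" by simp
      then show ?thesis by (simp add: ei)
    next
      case False
      then have "\<forall>j. e (\<alpha> i) j \<le> e d j" by (simp add: e_def)
      then have "e (\<alpha> i) = e d" using mg1 m1(2) by blast
      then have "e d i = e (\<alpha> i) i" by simp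
      then show ?thesis by (simp add: ei)
    qed
  qed
  have "(THE d. d \<ge> 1 \<and> e d \<in> mingens I) = \<alpha> i"
    by (rule the_equality) (rule ex, rule uniq)
  then have d: "dexp I i = \<alpha> i" unfolding dexp_def e_def by simp
  have "(\<lambda>j. if j = i then dexp I i else 0) = e (\<alpha> i)" unfolding e_def d ..
  then show ?thesis using ex d by simp
qed

lemma dexp_pos: assumes "good_ideal I" shows "0 < dexp I i"
proof -
  have "1 \<le> dexp I i" using dexp_props[OF assms] by blast
  then show ?thesis by simp
qed

lemma dexp_in: "good_ideal I \<Longrightarrow> mono (\<lambda>j. if j = i then dexp I i else 0) \<in> I"
  using dexp_props mingens_in by blast

lemma cD_list:
  assumes good: "good_ideal (I::('n::finite,'k::field) mpoly set)"
  shows "\<exists>xs. length xs = (\<Sum>j\<in>UNIV. c j) \<and> set xs \<subseteq> I \<and> prod_list xs = mono (\<lambda>j. c j * dexp I j)"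
proof (induction "\<Sum>j\<in>UNIV. c j" arbitrary: c)
  case 0
  then have "c = 0" by (simp add: fun_eq_iff)
  then show ?case using mono_zero by (auto simp: zero_fun_def)
next
  case (Suc n)
  then obtain i where "c i > 0" by (metis sum.neutral gr0I nat.distinct(1))
  define c' where "c' = c(i := c i - 1)"
  have c: "c = c' + (\<lambda>j. if j = i then 1 else 0)" using \<open>c i > 0\<close> by (auto simp: c'_def fun_eq_iff)
  have "(\<Sum>j\<in>UNIV. c j) = (\<Sum>j\<in>UNIV. c' j) + 1" by (subst c) (simp add: sum.distrib)
  then have "n = (\<Sum>j\<in>UNIV. c' j)" using Suc by simp
  then obtain xs where xs: "length xs = (\<Sum>j\<in>UNIV. c' j)" "set xs \<subseteq> I" "prod_list xs = mono (\<lambda>j. c' j * dexp I j)"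
    using Suc by blast
  let ?m = "mono (\<lambda>j. if j = i then dexp I i else 0) :: ('n,'k) mpoly"
  have "?m * prod_list xs = mono ((\<lambda>j. if j = i then dexp I i else 0) + (\<lambda>j. c' j * dexp I j))"
    by (simp add: xs mono_mult)
  also have "(\<lambda>j. if j = i then dexp I i else 0) + (\<lambda>j. c' j * dexp I j) = (\<lambda>j. c j * dexp I j)"
  proof (rule ext)
    fix j
    obtain m where m: "c i = Suc m" using \<open>c i > 0\<close> gr0_implies_Suc by blast
    show "((\<lambda>j. if j = i then dexp I i else 0) + (\<lambda>j. c' j * dexp I j)) j = c j * dexp I j"
      by (cases "j = i") (simp_all add: c'_def m)
  qed
  finally show ?case using xs dexp_in[OF good, of i] \<open>(\<Sum>j\<in>UNIV. c j) = (\<Sum>j\<in>UNIV. c' j) + 1\<close>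
    by (intro exI[of _ "?m # xs"]) auto
qed

lemma cD_in:
  assumes good: "good_ideal (I::('n::finite,'k::field) mpoly set)"
  shows "mono (\<lambda>j. c j * dexp I j) \<in> ideal_pow I (\<Sum>j\<in>UNIV. c j)"
  using cD_list[OF good, of c] pow_gen by metis

lemma c_exists:
  fixes b :: "'n::finite \<Rightarrow> nat"
  shows "k \<le> (\<Sum>j\<in>UNIV. b j) \<Longrightarrow> \<exists>c. (\<forall>j. c j \<le> b j) \<and> (\<Sum>j\<in>UNIV. c j) = k"
proof (induction k)
  case 0 then show ?case by (intro exI[of _ "\<lambda>_. 0"]) simp
next
  case (Suc k)
  then obtain c where c: "\<forall>j. c j \<le> b j" "(\<Sum>j\<in>UNIV. c j) = k" by auto
  have "\<exists>j. c j < b j"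
  proof (rule ccontr)
    assume "\<not> (\<exists>j. c j < b j)"
    then have "\<forall>j. b j \<le> c j" by (simp add: not_less)
    then have "(\<Sum>j\<in>UNIV. b j) \<le> (\<Sum>j\<in>UNIV. c j)" by (intro sum_mono) auto
    then show False using Suc.prems c(2) by simp
  qed
  then obtain j0 where j0: "c j0 < b j0" by blast
  define c' where "c' = (\<lambda>j. c j + (if j = j0 then 1 else 0))"
  have "\<forall>j. c' j \<le> b j" using c(1) j0 by (auto simp: c'_def)
  moreover have "(\<Sum>j\<in>UNIV. c' j) = Suc k" using c(2) by (simp add: c'_def sum.distrib)
  ultimately show ?case by blast
qed

lemma div_bound:
  assumes "(x::nat) * d \<le> y" "0 < d"
  shows "x \<le> y div d"
  using assms by (metis div_le_mono div_mult_self_is_m)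

lemma box_bound:
  fixes I :: "('n::finite,'k::field) mpoly set"
  assumes good: "good_ideal I" and box: "\<alpha> \<in> box I a"
    and le: "\<forall>j. \<alpha> j \<le> \<gamma> j + (if j = i then N * dexp I i else 0)"
  shows "\<forall>j. a j \<le> \<gamma> j div dexp I j + (if j = i then N else 0)"
proof
  fix j
  have d: "0 < dexp I j" by (rule dexp_pos[OF good])
  have "a j * dexp I j \<le> \<alpha> j" using box by (simp add: box_def)
  also have "\<dots> \<le> \<gamma> j + (if j = i then N else 0) * dexp I j" using le[rule_format, of j] by (cases "j = i") auto
  finally have "a j \<le> (\<gamma> j + (if j = i then N else 0) * dexp I j) div dexp I j" using d by (rule div_bound)
  also have "\<dots> = \<gamma> j div dexp I j + (if j = i then N else 0)" using d by simp
  finally show "a j \<le> \<gamma> j div dexp I j + (if j = i then N else 0)" .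
qed

lemma sum_shift:
  fixes b :: "'n::finite \<Rightarrow> nat"
  shows "(\<Sum>j\<in>UNIV. b j + (if j = i then N else 0)) = (\<Sum>j\<in>UNIV. b j) + N"
  by (simp add: sum.distrib)

lemma core:
  fixes I :: "('n::finite,'k::field) mpoly set" and \<gamma> :: "'n \<Rightarrow> nat"
    and v :: "nat \<Rightarrow> ('n \<Rightarrow> nat)" and S :: "nat \<Rightarrow> 'n set"
  assumes good: "good_ideal I"
    and cover: "(\<Union>j<r. cone (v j) (S j)) = UNIV"
    and const: "\<And>j a b. j < r \<Longrightarrow> a \<in> cone (v j) (S j) \<Longrightarrow> b \<in> cone (v j) (S j) \<Longrightarrow> ideal_at I a = ideal_at I b"
    and zero_dim: "\<And>j. j < r \<Longrightarrow> cone_dim (S j) = 0 \<Longrightarrow> (\<Sum>i\<in>UNIV. v j i) < L"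
    and k: "k \<ge> L + 1"
    and H: "\<And>i. mono (\<lambda>j. \<gamma> j + (if j = i then N * dexp I i else 0)) \<in> ideal_pow I (k + N)"
  shows "mono \<gamma> \<in> ideal_pow I k"
proof -
  have goodbox: "\<And>l \<alpha>. l \<ge> 1 \<Longrightarrow> \<alpha> \<in> mingens (ideal_pow I l) \<Longrightarrow> \<exists>a. (\<Sum>i\<in>UNIV. a i) = l - 1 \<and> \<alpha> \<in> box I a"
    using good unfolding good_ideal_def by blast
  define b where "b = (\<lambda>j. \<gamma> j div dexp I j)"
  have getA: "\<exists>\<alpha> a. \<alpha> \<in> mingens (ideal_pow I (k + N)) \<and> (\<forall>j. \<alpha> j \<le> \<gamma> j + (if j = i then N * dexp I i else 0))
      \<and> \<alpha> \<in> box I a \<and> (\<Sum>j\<in>UNIV. a j) = k + N - 1 \<and> (\<forall>j. a j \<le> b j + (if j = i then N else 0))" for i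
  proof -
    obtain \<alpha> where \<alpha>: "\<alpha> \<in> mingens (ideal_pow I (k + N))" "\<forall>j. \<alpha> j \<le> \<gamma> j + (if j = i then N * dexp I i else 0)"
      using exists_mingen[OF H[of i]] by blast
    obtain a where a: "(\<Sum>j\<in>UNIV. a j) = k + N - 1" "\<alpha> \<in> box I a" using goodbox[OF _ \<alpha>(1)] k by auto
    have "\<forall>j. a j \<le> b j + (if j = i then N else 0)" unfolding b_def by (rule box_bound[OF good a(2) \<alpha>(2)])
    then show ?thesis using \<alpha> a by blast
  qed
  obtain \<alpha>0 a0 where A0: "(\<Sum>j\<in>UNIV. a0 j) = k + N - 1" "\<forall>j. a0 j \<le> b j + (if j = undefined then N else 0)"
    using getA[of undefined] by blast
  have "(\<Sum>j\<in>UNIV. a0 j) \<le> (\<Sum>j\<in>UNIV. b j + (if j = undefined then N else 0))" using A0(2) by (intro sum_mono) auto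
  then have sb: "k - 1 \<le> (\<Sum>j\<in>UNIV. b j)" using A0(1) k by (simp add: sum.distrib)
  have bg: "b j * dexp I j \<le> \<gamma> j" for j unfolding b_def by (rule div_times_less_eq_dividend)
  show ?thesis
  proof (cases "k \<le> (\<Sum>j\<in>UNIV. b j)")
    case True
    then obtain c where c: "\<forall>j. c j \<le> b j" "(\<Sum>j\<in>UNIV. c j) = k" using c_exists by blast
    have "mono (\<lambda>j. c j * dexp I j) \<in> ideal_pow I k" using cD_in[OF good, of c] c(2) by simp
    moreover have "\<forall>j. c j * dexp I j \<le> \<gamma> j" using c(1) bg by (meson mult_le_mono1 order_trans)
    ultimately show ?thesis by (rule mono_le_in[OF ideal_pow_ideal])
  next
    case False
    then have sbe: "(\<Sum>j\<in>UNIV. b j) = k - 1" using sb by simp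
    have "b \<in> (\<Union>j<r. cone (v j) (S j))" using cover by simp
    then obtain j0 where j0: "j0 < r" "b \<in> cone (v j0) (S j0)" by blast
    have "\<exists>i. i \<notin> S j0"
    proof (rule ccontr)
      assume "\<not> (\<exists>i. i \<notin> S j0)"
      then have SU: "S j0 = UNIV" by auto
      then have "cone_dim (S j0) = 0" by (simp add: cone_dim_def)
      then have "(\<Sum>i\<in>UNIV. v j0 i) < L" using zero_dim j0(1) by blast
      moreover have "b = v j0" using j0(2) SU by (auto simp: cone_def fun_eq_iff)
      ultimately show False using sbe k by simp
    qed
    then obtain i where i: "i \<notin> S j0" by blast
    define b' where "b' = (\<lambda>j. b j + (if j = i then N else 0))"
    have "b' \<in> cone (v j0) (S j0)" using j0(2) i unfolding cone_def b'_def
      by (auto simp: trans_le_add1)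
    then have eqI: "ideal_at I b' = ideal_at I b" using const j0 by blast
    obtain \<alpha> a where \<alpha>: "\<alpha> \<in> mingens (ideal_pow I (k + N))" "\<forall>j. \<alpha> j \<le> \<gamma> j + (if j = i then N * dexp I i else 0)"
      "\<alpha> \<in> box I a" "(\<Sum>j\<in>UNIV. a j) = k + N - 1" "\<forall>j. a j \<le> b j + (if j = i then N else 0)"
      using getA[of i] by blast
    have "(\<Sum>j\<in>UNIV. b' j) = k - 1 + N" unfolding b'_def using sbe by (simp add: sum.distrib)
    then have "a = b'" using \<alpha>(4,5) k le_sum_eq[of a b'] unfolding b'_def by simp
    define \<delta> where "\<delta> = (\<lambda>j. \<alpha> j - a j * dexp I j)"
    define P where "P = (\<lambda>\<alpha>'. \<alpha>' \<in> box I b \<inter> mingens (ideal_pow I ((\<Sum>i\<in>UNIV. b i) + 1)))"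
    define g where "g = (\<lambda>\<alpha>'::'n\<Rightarrow>nat. (\<lambda>i. \<alpha>' i - b i * dexp I i))"
    have sa: "(\<Sum>i\<in>UNIV. a i) + 1 = k + N" using \<alpha>(4) k by simp
    have "mono \<delta> \<in> {mono (\<lambda>i. \<alpha> i - a i * dexp I i) | \<alpha>. \<alpha> \<in> box I a \<inter> mingens (ideal_pow I ((\<Sum>i\<in>UNIV. a i) + 1))}"
      apply (rule CollectI)
      apply (rule exI[of _ \<alpha>])
      using \<alpha>(1,3) sa unfolding \<delta>_def by simp
    then have "mono \<delta> \<in> ideal_at I a" unfolding ideal_at_def by (rule subsetD[OF ideal_gen_subset])
    moreover have "ideal_at I a = ideal_at I b" using eqI \<open>a = b'\<close> by (simp only:)
    ultimately have "mono \<delta> \<in> ideal_at I b" by (simp only:)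
    moreover have "ideal_at I b = ideal_gen (mono ` (g ` {\<alpha>'. P \<alpha>'}))"
      unfolding ideal_at_def setcompr_eq_image image_image g_def P_def ..
    ultimately have m\<delta>: "mono \<delta> \<in> ideal_gen (mono ` (g ` {\<alpha>'. P \<alpha>'}) :: ('n,'k) mpoly set)" by simp
    have "\<delta> \<in> Poly_Mapping.keys (mono \<delta> :: ('n,'k) mpoly)" by simp
    from monomial_gen_char[OF m\<delta> this] obtain \<delta>' where \<delta>': "\<delta>' \<in> g ` {\<alpha>'. P \<alpha>'}" "\<forall>j. \<delta>' j \<le> \<delta> j"
      by blast
    then obtain \<alpha>' where \<alpha>'0: "\<delta>' = g \<alpha>'" "P \<alpha>'" by blast
    have \<alpha>': "\<delta>' = (\<lambda>i. \<alpha>' i - b i * dexp I i)" "\<alpha>' \<in> box I b" "\<alpha>' \<in> mingens (ideal_pow I ((\<Sum>i\<in>UNIV. b i) + 1))"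
      using \<alpha>'0 unfolding g_def P_def by auto
    have kk: "(\<Sum>i\<in>UNIV. b i) + 1 = k" using sbe k by simp
    have "mono \<alpha>' \<in> ideal_pow I k" using mingens_in[OF \<alpha>'(3)] kk by simp
    moreover have "\<forall>j. \<alpha>' j \<le> \<gamma> j"
    proof
      fix j
      have f1: "b j * dexp I j \<le> \<alpha>' j" using \<alpha>'(2) by (simp add: box_def)
      have f2: "a j * dexp I j \<le> \<alpha> j" using \<alpha>(3) by (simp add: box_def)
      have f3: "\<alpha>' j - b j * dexp I j \<le> \<alpha> j - a j * dexp I j" using \<delta>'(2) \<alpha>'(1) unfolding \<delta>_def by simp
      have f4: "\<alpha> j \<le> \<gamma> j + (if j = i then N * dexp I i else 0)" using \<alpha>(2) by simp
      have f5: "a j * dexp I j = b j * dexp I j + (if j = i then N * dexp I i else 0)"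
        using \<open>a = b'\<close> unfolding b'_def by (auto simp: algebra_simps)
      show "\<alpha>' j \<le> \<gamma> j" using f1 f2 f3 f4 f5 by linarith
    qed
    ultimately show ?thesis by (rule mono_le_in[OF ideal_pow_ideal])
  qed
qed

theorem mainTheorem17:
  fixes I :: "('n::finite, 'k::field) mpoly set"
    and r :: nat
    and v :: "nat \<Rightarrow> ('n \<Rightarrow> nat)"
    and S :: "nat \<Rightarrow> 'n set"
    and L :: nat
  assumes good: "good_ideal I"
    and cover: "(\<Union>j<r. cone (v j) (S j)) = UNIV"
    and disj: "\<And>j j'. j < r \<Longrightarrow> j' < r \<Longrightarrow> j \<noteq> j' \<Longrightarrow> cone (v j) (S j) \<inter> cone (v j') (S j') = {}"
    and const: "\<And>j a b. j < r \<Longrightarrow> a \<in> cone (v j) (S j) \<Longrightarrow> b \<in> cone (v j) (S j) \<Longrightarrow> ideal_at I a = ideal_at I b"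
    and L_def: "L = Max ((\<lambda>j. \<Sum>i\<in>UNIV. v j i) ` {..<r})"
    and zero_dim: "\<And>j. j < r \<Longrightarrow> cone_dim (S j) = 0 \<Longrightarrow> (\<Sum>i\<in>UNIV. v j i) < L"
  shows "\<forall>k::nat. k \<ge> L + 1 \<longrightarrow> ratliff_rush (ideal_pow I k) = ideal_pow I k"
proof (intro allI impI)
  fix k :: nat assume k: "k \<ge> L + 1"
  obtain E where IE: "I = ideal_gen (mono ` E)" using good_monomial[OF good] by blast
  define J where "J = ideal_pow I k"
  show "ratliff_rush (ideal_pow I k) = ideal_pow I k"
    unfolding J_def[symmetric]
  proof
    show "ratliff_rush J \<subseteq> J"
    proof
      fix f assume "f \<in> ratliff_rush J"
      then obtain s where f: "f \<in> colon (ideal_pow J (s + 1)) (ideal_pow J s)" unfolding ratliff_rush_def by blast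
      define N where "N = k * s"
      define sh where "sh = (\<lambda>i::'n. (\<lambda>j. if j = i then N * dexp I i else 0))"
      have shJ: "mono (sh i) \<in> ideal_pow J s" for i
      proof -
        have "mono (\<lambda>j. (if j = i then k else 0) * dexp I j) \<in> ideal_pow I (\<Sum>j\<in>UNIV. (if j = i then k else 0))"
          by (rule cD_in[OF good])
        moreover have "(\<lambda>j. (if j = i then k else 0) * dexp I j) = (\<lambda>j. if j = i then k * dexp I i else 0)"
          by (simp add: fun_eq_iff)
        ultimately have m: "mono (\<lambda>j. if j = i then k * dexp I i else 0) \<in> J" unfolding J_def by simp
        have "prod_list (replicate s (mono (\<lambda>j. if j = i then k * dexp I i else 0))) \<in> ideal_pow J s"
          using m by (intro pow_gen) auto
        moreover have "prod_list (replicate s (mono (\<lambda>j. if j = i then k * dexp I i else 0) :: ('n,'k) mpoly)) = mono (sh i)"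
        proof -
          have "(\<lambda>j. s * (if j = i then k * dexp I i else 0)) = sh i" by (simp add: sh_def N_def fun_eq_iff)
          then show ?thesis by (simp add: prod_list_replicate mono_pow)
        qed
        ultimately show ?thesis by simp
      qed
      have fs: "f * mono (sh i) \<in> ideal_pow I (k + N)" for i
      proof -
        have "f * mono (sh i) \<in> ideal_pow J (s + 1)" using f shJ[of i] unfolding colon_def by blast
        then have "f * mono (sh i) \<in> ideal_pow I (k * (s + 1))" using pow_pow[of I k "s+1"] unfolding J_def by blast
        then show ?thesis by (simp add: N_def algebra_simps)
      qed
      show "f \<in> J" unfolding J_def
      proof (rule ideal_from_keys[OF ideal_pow_ideal])
        fix \<beta> assume \<beta>: "\<beta> \<in> Poly_Mapping.keys f"
        show "mono \<beta> \<in> ideal_pow I k"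
        proof (rule core[OF good cover const zero_dim k])
          fix i
          have "\<beta> + sh i \<in> Poly_Mapping.keys (f * mono (sh i))" by (rule keys_mult_mono[OF \<beta>])
          then have "mono (\<beta> + sh i) \<in> ideal_pow I (k + N)" by (rule pow_monomial[OF IE fs])
          moreover have "\<beta> + sh i = (\<lambda>j. \<beta> j + (if j = i then N * dexp I i else 0))" by (simp add: sh_def fun_eq_iff)
          ultimately show "mono (\<lambda>j. \<beta> j + (if j = i then N * dexp I i else 0)) \<in> ideal_pow I (k + N)" by simp
        qed auto
      qed
    qed
  next
    show "J \<subseteq> ratliff_rush J"
    proof
      fix f assume f: "f \<in> J"
      have "f \<in> ideal_pow J 1" using pow_gen[of "[f]" 1 J] f by simp
      then have "\<forall>b\<in>ideal_pow J 0. f * b \<in> ideal_pow J 1" using ideal_multR[OF ideal_pow_ideal] by blast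
      then have "f \<in> colon (ideal_pow J (0 + 1)) (ideal_pow J 0)" unfolding colon_def by simp
      then show "f \<in> ratliff_rush J" unfolding ratliff_rush_def by blast
    qed
  qed
qed
end
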